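(* Let $n \ge 2$ and let $A \in \mathsf{M}_n(\mathbb{C})$ be convexoid. Then for every $k \in \{1,\ldots,n\}$, the field of values $F(A_{(k)})$ is inscribed in the polygon $\partial F(A)$; that is, $F(A_{(k)})$ has nonempty intersection with every side $\operatorname{co}(\lambda_j,\lambda_{j+1})$, $j = 1,\ldots,d$, of the polygon $\partial F(A)$ (notation as in the context).
   Context: For $B \in \mathsf{M}_m(\mathbb{C})$, the field of values (numerical range) is $F(B) = \{x^\ast B x : x \in \mathbb{C}^m,\ x^\ast x = 1\}$. $A_{(k)}$ denotes the $(n-1)$-by-$(n-1)$ principal submatrix of $A$ obtained by deleting the $k$th row and $k$th column. $\operatorname{co}(S)$ denotes the convex hull of a set $S \subset \mathbb{C}$, and $\sigma(A)$ the spectrum of $A$. $A$ is called convexoid if $F(A) = \operatorname{co}(\sigma(A))$. In that case $F(A)$ is the convex polygon $\operatorname{co}(\lambda_1,\ldots,\lambda_n)$, where $\lambda_1,\ldots,\lambda_n$ are the eigenvalues of $A$; label them so that $\lambda_1,\ldots,\lambda_d$ ($1 \le d \le n$) are the vertices of this polygon, listed consecutively along its boundary, so that $\partial F(A) = \bigcup_{j=1}^d \operatorname{co}(\lambda_j,\lambda_{j+1})$ with the convention $\lambda_{d+1} := \lambda_1$. A set $G$ is said to be inscribed in $F(A)$ if $G \cap \operatorname{co}(\lambda_j,\lambda_{j+1}) \neq \emptyset$ for all $j \in \{1,\ldots,d\}$. *)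

theory Defs
  imports "HOL-Analysis.Analysis"
begin

text \<open>Square matrices of size n are represented as functions nat => nat => complex,
  only entries with indices < n being relevant (0-based indices).
  Vectors are functions nat => complex, only entries < n relevant.\<close>

definition field_of_values :: "nat \<Rightarrow> (nat \<Rightarrow> nat \<Rightarrow> complex) \<Rightarrow> complex set" where
  "field_of_values n B =
     {(\<Sum>i<n. \<Sum>j<n. cnj (x i) * B i j * x j) | x :: nat \<Rightarrow> complex.
        (\<Sum>i<n. cnj (x i) * x i) = 1}"

definition spectrum_mat :: "nat \<Rightarrow> (nat \<Rightarrow> nat \<Rightarrow> complex) \<Rightarrow> complex set" where
  "spectrum_mat n B =
     {c. \<exists>x :: nat \<Rightarrow> complex. (\<exists>i<n. x i \<noteq> 0) \<and>
            (\<forall>i<n. (\<Sum>j<n. B i j * x j) = c * x i)}"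

text \<open>Principal submatrix obtained by deleting the k-th row and column (0-based k);
  it is an (n-1)-by-(n-1) matrix.\<close>
definition del_principal :: "nat \<Rightarrow> (nat \<Rightarrow> nat \<Rightarrow> complex) \<Rightarrow> nat \<Rightarrow> nat \<Rightarrow> complex" where
  "del_principal k B i j = B (if i < k then i else Suc i) (if j < k then j else Suc j)"

definition convexoid :: "nat \<Rightarrow> (nat \<Rightarrow> nat \<Rightarrow> complex) \<Rightarrow> bool" where
  "convexoid n B \<longleftrightarrow> field_of_values n B = convex hull (spectrum_mat n B)"

text \<open>A labelling of the vertices of the polygon P = co(spectrum) listed consecutively
  along its boundary: a duplicate-free list of exactly the vertices (extreme points)
  such that each side co(v_j, v_{j+1}) (indices mod d) lies on the boundary of P.\<close>
definition consecutive_vertices :: "complex set \<Rightarrow> complex list \<Rightarrow> bool" where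
  "consecutive_vertices P vs \<longleftrightarrow>
     distinct vs \<and> set vs = {v. v extreme_point_of P} \<and>
     (\<forall>j < length vs. closed_segment (vs ! j) (vs ! (Suc j mod length vs)) \<subseteq> frontier P)"

definition inscribed_in :: "complex set \<Rightarrow> complex list \<Rightarrow> bool" where
  "inscribed_in G vs \<longleftrightarrow>
     (\<forall>j < length vs. G \<inter> closed_segment (vs ! j) (vs ! (Suc j mod length vs)) \<noteq> {})"

end

theory Submission
  imports Defs "Jordan_Normal_Form.Char_Poly"
begin

lemma spectrum_finite: "finite (spectrum_mat n A)"
proof -
  define M where "M = Matrix.mat n n (\<lambda>(i,j). A i j)"
  have Mc: "M \<in> carrier_mat n n" unfolding M_def by auto
  have sub: "spectrum_mat n A \<subseteq> {k. poly (char_poly M) k = 0}"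
  proof
    fix c assume "c \<in> spectrum_mat n A"
    then obtain x where x: "\<exists>i<n. x i \<noteq> 0" "\<forall>i<n. (\<Sum>j<n. A i j * x j) = c * x i"
      unfolding spectrum_mat_def by auto
    define v where "v = Matrix.vec n x"
    have "eigenvector M v c" unfolding eigenvector_def
    proof (intro conjI)
      show "v \<in> carrier_vec (dim_row M)" using Mc v_def by auto
      show "v \<noteq> 0\<^sub>v (dim_row M)" using x(1) Mc unfolding v_def
        by (metis carrier_matD(1) index_vec index_zero_vec(1))
      show "M *\<^sub>v v = c \<cdot>\<^sub>v v"
      proof (rule eq_vecI)
        fix i assume i: "i < dim_vec (c \<cdot>\<^sub>v v)"
        then have i': "i < n" unfolding v_def by simp
        have "(M *\<^sub>v v) $ i = (\<Sum>j<n. A i j * x j)"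
          using i' unfolding M_def v_def scalar_prod_def
          by (auto intro!: sum.cong simp: lessThan_atLeast0 scalar_prod_def)
        also have "\<dots> = c * x i" using x(2) i' by auto
        finally show "(M *\<^sub>v v) $ i = (c \<cdot>\<^sub>v v) $ i" using i' unfolding v_def by simp
      qed (simp add: M_def v_def)
    qed
    then have "eigenvalue M c" unfolding eigenvalue_def by auto
    then show "c \<in> {k. poly (char_poly M) k = 0}" using eigenvalue_root_char_poly[OF Mc] by auto
  qed
  have "char_poly M \<noteq> 0" using degree_monic_char_poly[OF Mc] by auto
  then have "finite {k. poly (char_poly M) k = 0}" by (rule poly_roots_finite)
  then show ?thesis using sub finite_subset by auto
qed

lemma segment_lemma:
  fixes p q z a :: complex
  assumes pe: "p extreme_point_of P" and qe: "q extreme_point_of P" and zP: "z \<in> P"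
    and pq: "p \<noteq> q" and a: "a \<noteq> 0"
    and e1: "inner a p = inner a z" and e2: "inner a q = inner a z"
  shows "z \<in> closed_segment p q"
proof -
  define d where "d = q - p"
  define w where "w = z - p"
  have d0: "d \<noteq> 0" using pq d_def by auto
  have h1: "Re a * Re d + Im a * Im d = 0" using e1 e2 unfolding d_def inner_complex_def by (simp add: algebra_simps)
  have h2: "Re a * Re w + Im a * Im w = 0" using e1 unfolding w_def inner_complex_def by (simp add: algebra_simps)
  define cr where "cr = Re d * Im w - Im d * Re w"
  have "Re a * cr = Im w * (Re a * Re d + Im a * Im d) - Im d * (Re a * Re w + Im a * Im w)"
    unfolding cr_def by (simp add: algebra_simps)
  also have "\<dots> = 0" using h1 h2 by (simp add: algebra_simps)
  finally have c1: "Re a * cr = 0" .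
  have "Im a * cr = Re d * (Re a * Re w + Im a * Im w) - Re w * (Re a * Re d + Im a * Im d)"
    unfolding cr_def by (simp add: algebra_simps)
  also have "\<dots> = 0" using h1 h2 by (simp add: algebra_simps)
  finally have c2: "Im a * cr = 0" .
  have cr0: "cr = 0" using c1 c2 a by (metis complex_eqI mult_eq_0_iff zero_complex.sel(1) zero_complex.sel(2))
  define nd where "nd = Re d * Re d + Im d * Im d"
  have nd0: "nd > 0" using d0 unfolding nd_def
    using sum_squares_gt_zero_iff complex_eqI by (metis zero_complex.sel(1) zero_complex.sel(2))
  define t where "t = (Re w * Re d + Im w * Im d) / nd"
  have "Re w * nd = Re d * (Re w * Re d + Im w * Im d)"
    using cr0 unfolding cr_def nd_def by (simp add: algebra_simps)
  then have r1: "Re w = t * Re d" unfolding t_def using nd0 by (simp add: field_simps)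
  have "Im w * nd = Im d * (Re w * Re d + Im w * Im d)"
    using cr0 unfolding cr_def nd_def by (simp add: algebra_simps)
  then have r2: "Im w = t * Im d" unfolding t_def using nd0 by (simp add: field_simps)
  have wt: "w = of_real t * d" using r1 r2 by (simp add: complex_eq_iff)
  have zt: "z = p + of_real t * (q - p)" using wt unfolding w_def d_def by (simp add: algebra_simps)
  have pP: "p \<in> P" and qP: "q \<in> P" using pe qe extreme_point_of_def by auto
  show ?thesis
  proof (cases "t < 0")
    case True
    define mu where "mu = 1 / (1 - t)"
    have mu: "0 \<le> mu" "mu \<le> 1" using True unfolding mu_def by auto
    have "(1 - mu) *\<^sub>R q + mu *\<^sub>R z = p"
    proof -
      have h: "1 - mu * (1 - t) = 0" using True unfolding mu_def by auto
      have "(1 - mu) *\<^sub>R q + mu *\<^sub>R z = p + of_real (1 - mu * (1 - t)) * (q - p)"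
        unfolding zt scaleR_conv_of_real by (simp add: algebra_simps)
      then show ?thesis unfolding h by simp
    qed
    then have "p \<in> closed_segment q z" unfolding closed_segment_def using mu by blast
    moreover have "p \<noteq> z" using zt True pq by (auto simp: algebra_simps)
    ultimately have "p \<in> open_segment q z" using pq unfolding open_segment_def by auto
    then show ?thesis using pe qP zP unfolding extreme_point_of_def by blast
  next
    case False
    show ?thesis
    proof (cases "t > 1")
      case True
      define mu where "mu = 1 / t"
      have mu: "0 \<le> mu" "mu \<le> 1" using True unfolding mu_def by auto
      have h: "mu * t = 1" using True unfolding mu_def by auto
      have "(1 - mu) *\<^sub>R p + mu *\<^sub>R z = p + of_real (mu * t) * (q - p)"
        unfolding zt scaleR_conv_of_real by (simp add: algebra_simps)
      then have "(1 - mu) *\<^sub>R p + mu *\<^sub>R z = q" unfolding h by simp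
      then have "q \<in> closed_segment p z" unfolding closed_segment_def using mu by blast
      moreover have "q \<noteq> z"
      proof
        assume "q = z"
        then have "of_real (1 - t) * (q - p) = 0" using zt by (simp add: algebra_simps)
        then show False using True pq by simp
      qed
      ultimately have "q \<in> open_segment p z" using pq unfolding open_segment_def by auto
      then show ?thesis using qe pP zP unfolding extreme_point_of_def by blast
    next
      case False2: False
      have "z = (1 - t) *\<^sub>R p + t *\<^sub>R q" unfolding zt scaleR_conv_of_real by (simp add: algebra_simps)
      then show ?thesis unfolding closed_segment_def using False False2 by auto
    qed
  qed
qed


definition qf :: "nat \<Rightarrow> (nat \<Rightarrow> nat \<Rightarrow> complex) \<Rightarrow> (nat \<Rightarrow> complex) \<Rightarrow> complex" where
  "qf n M x = (\<Sum>i<n. \<Sum>j<n. cnj (x i) * M i j * x j)"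
definition nsq :: "nat \<Rightarrow> (nat \<Rightarrow> complex) \<Rightarrow> complex" where
  "nsq n x = (\<Sum>i<n. cnj (x i) * x i)"
definition bf :: "nat \<Rightarrow> (nat \<Rightarrow> nat \<Rightarrow> complex) \<Rightarrow> (nat \<Rightarrow> complex) \<Rightarrow> (nat \<Rightarrow> complex) \<Rightarrow> complex" where
  "bf n M x y = (\<Sum>i<n. \<Sum>j<n. cnj (x i) * M i j * y j)"

lemma fov_iff: "z \<in> field_of_values n M \<longleftrightarrow> (\<exists>x. nsq n x = 1 \<and> qf n M x = z)"
  unfolding field_of_values_def qf_def nsq_def by auto

lemma qf_scale: "qf n M (\<lambda>i. r * x i) = cnj r * r * qf n M x"
  unfolding qf_def by (simp add: sum_distrib_left algebra_simps)

lemma nsq_scale: "nsq n (\<lambda>i. r * x i) = cnj r * r * nsq n x"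
  unfolding nsq_def by (simp add: sum_distrib_left algebra_simps)

lemma qf_add_real: "qf n M (\<lambda>i. x i + of_real t * y i) =
   qf n M x + of_real t * (bf n M x y + bf n M y x) + of_real t ^ 2 * qf n M y"
  unfolding qf_def bf_def
  by (simp add: sum_distrib_left sum.distrib[symmetric] algebra_simps power2_eq_square)

lemma qf_cong: "(\<And>i. i < n \<Longrightarrow> x i = y i) \<Longrightarrow> qf n M x = qf n M y"
  unfolding qf_def by (auto intro!: sum.cong)

lemma nsq_cong: "(\<And>i. i < n \<Longrightarrow> x i = y i) \<Longrightarrow> nsq n x = nsq n y"
  unfolding nsq_def by (auto intro!: sum.cong)

lemma nsq_real: "nsq n x = of_real (\<Sum>i<n. (cmod (x i))\<^sup>2)"
  unfolding nsq_def of_real_sum by (intro sum.cong refl) (metis complex_norm_square mult.commute of_real_power)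

lemma nsq_zero: "Re (nsq n x) = 0 \<Longrightarrow> i < n \<Longrightarrow> x i = 0"
  unfolding nsq_real by (simp add: sum_nonneg_eq_0_iff)

lemma null_lemma:
  assumes nn: "\<And>x. Re (qf n M x) \<ge> 0" and x0: "Re (qf n M x) = 0"
  shows "Re (qf n M (\<lambda>i. x i + y i)) = Re (qf n M y)"
proof -
  define L where "L = Re (bf n M x y + bf n M y x)"
  define q where "q = Re (qf n M y)"
  have q0: "q \<ge> 0" using nn q_def by auto
  have key: "Re (qf n M (\<lambda>i. x i + of_real t * y i)) = t * L + t\<^sup>2 * q" for t
    unfolding qf_add_real L_def q_def using x0
    by (simp add: power2_eq_square)
  define t where "t = - L / (q + 1)"
  have "0 \<le> t * L + t\<^sup>2 * q" using key[of t] nn by metis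
  then have "0 \<le> (q+1)\<^sup>2 * (t * L + t\<^sup>2 * q)" by simp
  also have "(q+1)\<^sup>2 * (t * L + t\<^sup>2 * q) = - L\<^sup>2"
  proof -
    have ht: "t * (q + 1) = - L" unfolding t_def using q0 by simp
    have "(q+1)\<^sup>2 * (t * L + t\<^sup>2 * q) = (q+1) * (t * (q + 1)) * L + (t * (q + 1))\<^sup>2 * q"
      by (simp add: algebra_simps power2_eq_square)
    also have "\<dots> = - L\<^sup>2" unfolding ht by (simp add: algebra_simps power2_eq_square)
    finally show ?thesis .
  qed
  finally have "L\<^sup>2 \<le> 0" by simp
  then have "L = 0" by simp
  then show ?thesis using key[of 1] unfolding q_def by simp
qed

definition skip :: "nat \<Rightarrow> nat \<Rightarrow> nat" where
  "skip k i = (if i < k then i else Suc i)"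

lemma sum_skip:
  assumes "k < n"
  shows "(\<Sum>i<n. f i) = f k + (\<Sum>i<n-1. f (skip k i))"
proof -
  have inj: "inj_on (skip k) {..<n-1}" unfolding skip_def inj_on_def by auto
  have img: "skip k ` {..<n-1} = {..<n} - {k}"
  proof
    show "skip k ` {..<n-1} \<subseteq> {..<n} - {k}" unfolding skip_def using assms by auto
    show "{..<n} - {k} \<subseteq> skip k ` {..<n-1}"
    proof
      fix i assume i: "i \<in> {..<n} - {k}"
      show "i \<in> skip k ` {..<n-1}"
      proof (cases "i < k")
        case True then show ?thesis using i assms unfolding skip_def
          by (intro image_eqI[of _ _ i]) auto
      next
        case False then have "i = skip k (i - 1)" "i - 1 < n - 1" using i unfolding skip_def by auto
        then show ?thesis by blast
      qed
    qed
  qed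
  have "(\<Sum>i<n. f i) = f k + (\<Sum>i\<in>{..<n} - {k}. f i)"
    using assms by (simp add: sum.remove)
  also have "(\<Sum>i\<in>{..<n} - {k}. f i) = (\<Sum>i<n-1. f (skip k i))"
    unfolding img[symmetric] using sum.reindex[OF inj, of f] by (simp add: comp_def)
  finally show ?thesis .
qed

lemma restrict_qf:
  assumes "k < n" "x k = 0"
  shows "qf n A x = qf (n-1) (del_principal k A) (\<lambda>i. x (skip k i))"
    and "nsq n x = nsq (n-1) (\<lambda>i. x (skip k i))"
proof -
  show "qf n A x = qf (n-1) (del_principal k A) (\<lambda>i. x (skip k i))"
    unfolding qf_def sum_skip[OF assms(1), of "\<lambda>i. \<Sum>j<n. _ i j"]
    by (simp add: assms sum_skip[OF assms(1)] del_principal_def skip_def[symmetric])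
  show "nsq n x = nsq (n-1) (\<lambda>i. x (skip k i))"
    unfolding nsq_def by (simp add: assms sum_skip[OF assms(1)])
qed

lemma restrict_mem:
  assumes "k < n" "x k = 0" "nsq n x = 1"
  shows "qf n A x \<in> field_of_values (n-1) (del_principal k A)"
  using restrict_qf(1)[of k n x A, OF assms(1,2)] restrict_qf(2)[of k n x, OF assms(1,2)] assms(3) unfolding fov_iff by auto

lemma sub_in_fov:
  assumes "k < n" "z \<in> field_of_values (n-1) (del_principal k A)"
  shows "z \<in> field_of_values n A"
proof -
  obtain y where y: "nsq (n-1) y = 1" "qf (n-1) (del_principal k A) y = z" using assms(2) fov_iff by metis
  define x where "x i = (if i < k then y i else if i = k then 0 else y (i - 1))" for i
  have xs: "(\<lambda>i. x (skip k i)) = y" unfolding x_def skip_def by auto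
  have "x k = 0" unfolding x_def by auto
  then show ?thesis using restrict_qf(1)[of k n x A, OF assms(1)] restrict_qf(2)[of k n x, OF assms(1)] xs y unfolding fov_iff by auto
qed

lemma sub_nonempty:
  assumes "n \<ge> 2"
  shows "field_of_values (n-1) B \<noteq> {}"
proof -
  define y where "y i = (if i = 0 then 1 else (0::complex))" for i :: nat
  have "nsq (n-1) y = (\<Sum>i<n-1. if i = 0 then 1 else 0)" unfolding nsq_def y_def
    by (intro sum.cong refl) simp
  also have "\<dots> = 1" using assms by (simp add: sum.delta)
  finally have ny: "nsq (n-1) y = 1" .
  then have "qf (n-1) B y \<in> field_of_values (n-1) B" using fov_iff by blast
  then show ?thesis by blast
qed


lemma cnj_mult_self: "cnj r * r = of_real ((cmod r)\<^sup>2)"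
  by (metis complex_norm_square mult.commute of_real_power)

lemma Re_scale: "Re (cnj r * r * z) = (cmod r)\<^sup>2 * Re z"
  unfolding cnj_mult_self by simp

lemma nsq_Re: "nsq n x = of_real (Re (nsq n x))" and nsq_nonneg: "Re (nsq n x) \<ge> 0"
  unfolding nsq_real by (auto intro: sum_nonneg)

lemma inner_Re: "inner a (z::complex) = Re (cnj a * z)"
  unfolding inner_complex_def by simp

lemma qM_lemma: "qf n (\<lambda>i j. (if i = j then of_real c else 0) - cnj a * A i j) x = of_real c * nsq n x - cnj a * qf n A x"
proof -
  have h: "(\<Sum>j<n. cnj (x i) * ((if i = j then of_real c else 0) - cnj a * A i j) * x j)
     = of_real c * (cnj (x i) * x i) - cnj a * (\<Sum>j<n. cnj (x i) * A i j * x j)" if "i < n" for i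
  proof -
    have "(\<Sum>j<n. cnj (x i) * ((if i = j then of_real c else 0) - cnj a * A i j) * x j)
       = (\<Sum>j<n. (if i = j then of_real c * (cnj (x i) * x j) else 0)) - (\<Sum>j<n. cnj a * (cnj (x i) * A i j * x j))"
      unfolding sum_subtractf[symmetric] by (intro sum.cong refl) (auto simp: algebra_simps)
    also have "\<dots> = of_real c * (cnj (x i) * x i) - cnj a * (\<Sum>j<n. cnj (x i) * A i j * x j)"
      using that by (simp add: sum.delta sum_distrib_left)
    finally show ?thesis .
  qed
  have "qf n (\<lambda>i j. (if i = j then of_real c else 0) - cnj a * A i j) x
     = (\<Sum>i<n. of_real c * (cnj (x i) * x i) - cnj a * (\<Sum>j<n. cnj (x i) * A i j * x j))"
    unfolding qf_def using h by (intro sum.cong refl) auto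
  also have "\<dots> = of_real c * nsq n x - cnj a * qf n A x"
    unfolding nsq_def qf_def by (simp add: sum_subtractf sum_distrib_left)
  finally show ?thesis .
qed

lemma main_aux:
  fixes n :: nat and A :: "nat \<Rightarrow> nat \<Rightarrow> complex" and vs :: "complex list"
  assumes fin: "finite (spectrum_mat n A)"
    and n2: "n \<ge> 2"
    and cx: "convexoid n A"
    and cv: "consecutive_vertices (field_of_values n A) vs"
    and kn: "k < n"
  shows "inscribed_in (field_of_values (n - 1) (del_principal k A)) vs"
  unfolding inscribed_in_def
proof (intro allI impI)
  define P where "P = field_of_values n A"
  define G where "G = field_of_values (n - 1) (del_principal k A)"
  have Pdef: "P = convex hull (spectrum_mat n A)" using cx unfolding convexoid_def P_def by simp
  have convP: "convex P" unfolding Pdef by simp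
  have compP: "compact P" unfolding Pdef using fin by (simp add: compact_convex_hull finite_imp_compact)
  have dist: "distinct vs" and sv: "set vs = {v. v extreme_point_of P}"
    and fr: "\<And>j. j < length vs \<Longrightarrow> closed_segment (vs ! j) (vs ! (Suc j mod length vs)) \<subseteq> frontier P"
    using cv unfolding consecutive_vertices_def P_def by auto
  have GP: "G \<subseteq> P" unfolding G_def P_def using sub_in_fov[OF kn] by blast
  fix j assume j: "j < length vs"
  define L where "L = length vs"
  define j' where "j' = Suc j mod L"
  have L0: "0 < L" using j L_def by linarith
  have j'L: "j' < L" unfolding j'_def using L0 by simp
  define p where "p = vs ! j"
  define q where "q = vs ! j'"
  have pe: "p extreme_point_of P" using sv j unfolding p_def by (metis mem_Collect_eq nth_mem)
  have qe: "q extreme_point_of P" using sv j'L unfolding q_def L_def by (metis mem_Collect_eq nth_mem)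
  have pP: "p \<in> P" and qP: "q \<in> P" using pe qe extreme_point_of_def by auto
  have segF: "closed_segment p q \<subseteq> frontier P" using fr[OF j] unfolding p_def q_def j'_def L_def .
  have "G \<inter> closed_segment p q \<noteq> {}"
  proof (cases "p = q")
    case True
    then have "j = j'" using nth_eq_iff_index_eq[OF dist j j'L[unfolded L_def]] unfolding p_def q_def by simp
    have L1: "L = 1"
    proof (cases "Suc j < L")
      case True then show ?thesis using \<open>j = j'\<close> unfolding j'_def by simp
    next
      case False then have "Suc j = L" using j L_def by simp
      then show ?thesis using \<open>j = j'\<close> unfolding j'_def by simp
    qed
    then have "set vs = {p}" using j unfolding L_def p_def
      by (cases vs) auto
    then have "P = convex hull {p}" using Krein_Milman_Minkowski[OF compP convP] sv by simp
    then have "P = {p}" by simp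
    moreover have "G \<noteq> {}" unfolding G_def using sub_nonempty[OF n2] .
    ultimately have "p \<in> G" using GP by auto
    then show ?thesis by auto
  next
    case False
    define m where "m = midpoint p q"
    have mseg: "m \<in> closed_segment p q" unfolding m_def by simp
    have mF: "m \<in> frontier P" using mseg segF by auto
    have mP: "m \<in> P" using mseg convP pP qP by (meson convex_contains_segment subsetD)
    obtain a where a0: "a \<noteq> 0" and sup: "\<And>z. z \<in> P \<Longrightarrow> inner a z \<le> inner a m"
    proof (cases "interior P = {}")
      case True
      then obtain a b where "a \<noteq> 0" "P \<subseteq> {x. inner a x = b}"
        using empty_interior_subset_hyperplane[OF convP] by metis
      then show ?thesis using mP by (intro that[of a]) (auto simp: subset_iff)
    next
      case False
      then have "rel_interior P = interior P" by (rule rel_interior_nonempty_interior)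
      then have "m \<notin> rel_interior P" using mF frontier_def by auto
      then obtain a where "a \<noteq> 0" "\<And>y. y \<in> P \<Longrightarrow> inner a m \<le> inner a y"
        using supporting_hyperplane_rel_boundary[OF convP mP] by metis
      then show ?thesis by (intro that[of "-a"]) auto
    qed
    define c where "c = inner a m"
    have cm: "c = (inner a p + inner a q) / 2" unfolding c_def m_def midpoint_def
      by (simp add: inner_add_right inner_scaleR_right)
    have pc: "inner a p = c" and qc: "inner a q = c" using sup[OF pP] sup[OF qP] cm c_def by auto
    have segL: "\<And>z. z \<in> P \<Longrightarrow> inner a z = c \<Longrightarrow> z \<in> closed_segment p q"
      using segment_lemma[OF pe qe _ False a0] pc qc by metis
    define M where "M i j = (if i = j then of_real c else 0) - cnj a * A i j" for i j
    have qM: "qf n M x = of_real c * nsq n x - cnj a * qf n A x" for x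
      unfolding M_def by (rule qM_lemma)
    have hQ: "Re (qf n M x) = c * Re (nsq n x) - inner a (qf n A x)" for x
      unfolding qM inner_Re by simp
    have nn: "Re (qf n M x) \<ge> 0" for x
    proof -
      define s where "s = Re (nsq n x)"
      have s0: "s \<ge> 0" unfolding s_def by (rule nsq_nonneg)
      show ?thesis
      proof (cases "s = 0")
        case True
        then have "qf n M x = qf n M (\<lambda>_. 0)" using nsq_zero s_def by (metis qf_cong)
        then show ?thesis unfolding qf_def by simp
      next
        case False
        define r where "r = 1 / sqrt s"
        define x' where "x' i = of_real r * x i" for i
        have "nsq n x' = of_real (r\<^sup>2 * s)" unfolding x'_def nsq_scale
          using nsq_Re[of n x] unfolding s_def[symmetric] by (simp add: power2_eq_square)
        also have "r\<^sup>2 * s = 1" unfolding r_def using False s0 by (simp add: power_divide)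
        finally have "nsq n x' = 1" by simp
        then have "qf n A x' \<in> P" unfolding P_def fov_iff by auto
        then have "inner a (qf n A x') \<le> c" using sup c_def by auto
        then have "Re (qf n M x') \<ge> 0" unfolding hQ using \<open>nsq n x' = 1\<close> by simp
        moreover have "Re (qf n M x') = r\<^sup>2 * Re (qf n M x)" unfolding x'_def qf_scale Re_scale by simp
        moreover have "r\<^sup>2 > 0" unfolding r_def using False s0 by simp
        ultimately show ?thesis by (simp add: zero_le_mult_iff)
      qed
    qed
    obtain u where u1: "nsq n u = 1" and up: "qf n A u = p" using pP unfolding P_def fov_iff by auto
    obtain w where w1: "nsq n w = 1" and wq: "qf n A w = q" using qP unfolding P_def fov_iff by auto
    have Qu: "Re (qf n M u) = 0" unfolding hQ u1 up pc by simp
    have Qw: "Re (qf n M w) = 0" unfolding hQ w1 wq qc by simp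
    show ?thesis
    proof (cases "u k = 0")
      case True
      then have "p \<in> G" unfolding G_def using restrict_mem[OF kn True u1, of A] up by simp
      then show ?thesis by auto
    next
      case uk: False
      show ?thesis
      proof (cases "w k = 0")
        case True
        then have "q \<in> G" unfolding G_def using restrict_mem[OF kn True w1, of A] wq by simp
        then show ?thesis by auto
      next
        case wk: False
        define x where "x i = w k * u i + (- u k) * w i" for i
        have "Re (qf n M (\<lambda>i. w k * u i)) = 0" unfolding qf_scale Re_scale Qu by simp
        then have "Re (qf n M x) = Re (qf n M (\<lambda>i. (- u k) * w i))"
          unfolding x_def by (rule null_lemma[OF nn])
        then have Qx: "Re (qf n M x) = 0" unfolding qf_scale Re_scale Qw by simp
        have xk: "x k = 0" unfolding x_def by simp
        define s where "s = Re (nsq n x)"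
        have s0: "s \<ge> 0" unfolding s_def by (rule nsq_nonneg)
        show ?thesis
        proof (cases "s = 0")
          case True
          define r where "r = u k / w k"
          have ur: "u i = r * w i" if "i < n" for i
          proof -
            have "x i = 0" using nsq_zero True s_def that by metis
            then show ?thesis unfolding x_def r_def using wk by (simp add: field_simps)
          qed
          have "qf n A u = qf n A (\<lambda>i. r * w i)" using ur by (rule qf_cong)
          then have pr: "p = cnj r * r * q" using up wq qf_scale by simp
          have "nsq n u = nsq n (\<lambda>i. r * w i)" using ur by (rule nsq_cong)
          then have "cnj r * r = 1" using u1 w1 nsq_scale by simp
          then have "p = q" using pr by simp
          then show ?thesis using False by simp
        next
          case False
          define r where "r = 1 / sqrt s"
          define x' where "x' i = of_real r * x i" for i
          have "nsq n x' = of_real (r\<^sup>2 * s)" unfolding x'_def nsq_scale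
            using nsq_Re[of n x] unfolding s_def[symmetric] by (simp add: power2_eq_square)
          also have "r\<^sup>2 * s = 1" unfolding r_def using False s0 by (simp add: power_divide)
          finally have x'1: "nsq n x' = 1" by simp
          have x'k: "x' k = 0" unfolding x'_def xk by simp
          have "Re (qf n M x') = 0" unfolding x'_def qf_scale Re_scale Qx by simp
          then have "inner a (qf n A x') = c" unfolding hQ x'1 by simp
          moreover have "qf n A x' \<in> P" unfolding P_def fov_iff using x'1 by auto
          ultimately have "qf n A x' \<in> closed_segment p q" using segL by auto
          moreover have "qf n A x' \<in> G" unfolding G_def using restrict_mem[OF kn x'k x'1, of A] .
          ultimately show ?thesis by auto
        qed
      qed
    qed
  qed
  then show "field_of_values (n - 1) (del_principal k A) \<inter>
    closed_segment (vs ! j) (vs ! (Suc j mod length vs)) \<noteq> {}"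
    unfolding G_def p_def q_def j'_def L_def .
qed


theorem mainTheorem3:
  fixes n :: nat and A :: "nat \<Rightarrow> nat \<Rightarrow> complex" and vs :: "complex list"
  assumes "n \<ge> 2"
    and "convexoid n A"
    and "consecutive_vertices (field_of_values n A) vs"
    and "k < n"
  shows "inscribed_in (field_of_values (n - 1) (del_principal k A)) vs"
  using main_aux[OF spectrum_finite assms] .

end
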